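(* Let $S$ be a $\Gamma$-AG$^{**}$-groupoid. Then $S$ is intra-regular if and only if $A=(S\Gamma A)\Gamma(S\Gamma A)$ for every left $\Gamma$-ideal $A$ of $S$.
   Context: Let $S$ and $\Gamma$ be nonempty sets with a map $S\times\Gamma\times S\to S$, $(x,\gamma,y)\mapsto x\gamma y$. $S$ is a $\Gamma$-AG-groupoid if $(x\gamma y)\delta z=(z\gamma y)\delta x$ for all $x,y,z\in S$, $\gamma,\delta\in\Gamma$; it is a $\Gamma$-AG$^{**}$-groupoid if moreover $a\alpha(b\beta c)=b\alpha(a\beta c)$ for all $a,b,c\in S$, $\alpha,\beta\in\Gamma$. For subsets $A,B\subseteq S$, $A\Gamma B=\{a\gamma b: a\in A,\gamma\in\Gamma,b\in B\}$. $S$ is intra-regular if for every $a\in S$ there exist $x,y\in S$ and $\beta,\gamma,\delta\in\Gamma$ with $a=(x\beta(a\delta a))\gamma y$. A nonempty subset $A$ is a left $\Gamma$-ideal if $S\Gamma A\subseteq A$. *)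

theory Defs
  imports Main
begin

definition gamma_closed :: "'s set \<Rightarrow> 'g set \<Rightarrow> ('s \<Rightarrow> 'g \<Rightarrow> 's \<Rightarrow> 's) \<Rightarrow> bool" where
  "gamma_closed S G m \<longleftrightarrow> S \<noteq> {} \<and> G \<noteq> {} \<and>
     (\<forall>x\<in>S. \<forall>g\<in>G. \<forall>y\<in>S. m x g y \<in> S)"

definition gamma_AG_groupoid :: "'s set \<Rightarrow> 'g set \<Rightarrow> ('s \<Rightarrow> 'g \<Rightarrow> 's \<Rightarrow> 's) \<Rightarrow> bool" where
  "gamma_AG_groupoid S G m \<longleftrightarrow> gamma_closed S G m \<and>
     (\<forall>x\<in>S. \<forall>y\<in>S. \<forall>z\<in>S. \<forall>g\<in>G. \<forall>d\<in>G. m (m x g y) d z = m (m z g y) d x)"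

definition gamma_AG2_groupoid :: "'s set \<Rightarrow> 'g set \<Rightarrow> ('s \<Rightarrow> 'g \<Rightarrow> 's \<Rightarrow> 's) \<Rightarrow> bool" where
  "gamma_AG2_groupoid S G m \<longleftrightarrow> gamma_AG_groupoid S G m \<and>
     (\<forall>a\<in>S. \<forall>b\<in>S. \<forall>c\<in>S. \<forall>\<alpha>\<in>G. \<forall>\<beta>\<in>G. m a \<alpha> (m b \<beta> c) = m b \<alpha> (m a \<beta> c))"

definition gprod :: "('s \<Rightarrow> 'g \<Rightarrow> 's \<Rightarrow> 's) \<Rightarrow> 's set \<Rightarrow> 'g set \<Rightarrow> 's set \<Rightarrow> 's set" where
  "gprod m A G B = {m a g b | a g b. a \<in> A \<and> g \<in> G \<and> b \<in> B}"

definition intra_regular :: "'s set \<Rightarrow> 'g set \<Rightarrow> ('s \<Rightarrow> 'g \<Rightarrow> 's \<Rightarrow> 's) \<Rightarrow> bool" where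
  "intra_regular S G m \<longleftrightarrow> (\<forall>a\<in>S. \<exists>x\<in>S. \<exists>y\<in>S. \<exists>\<beta>\<in>G. \<exists>\<gamma>\<in>G. \<exists>\<delta>\<in>G.
      a = m (m x \<beta> (m a \<delta> a)) \<gamma> y)"

definition left_gamma_ideal :: "'s set \<Rightarrow> 'g set \<Rightarrow> ('s \<Rightarrow> 'g \<Rightarrow> 's \<Rightarrow> 's) \<Rightarrow> 's set \<Rightarrow> bool" where
  "left_gamma_ideal S G m A \<longleftrightarrow> A \<noteq> {} \<and> A \<subseteq> S \<and> gprod m S G A \<subseteq> A"

end

theory Submission
  imports Defs
begin

theorem mainTheorem13:
  fixes S :: "'s set" and G :: "'g set" and m :: "'s \<Rightarrow> 'g \<Rightarrow> 's \<Rightarrow> 's"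
  assumes "gamma_AG2_groupoid S G m"
  shows "intra_regular S G m \<longleftrightarrow>
    (\<forall>A. left_gamma_ideal S G m A \<longrightarrow>
       A = gprod m (gprod m S G A) G (gprod m S G A))"
proof -
  have clo: "\<And>x g y. x \<in> S \<Longrightarrow> g \<in> G \<Longrightarrow> y \<in> S \<Longrightarrow> m x g y \<in> S"
    using assms unfolding gamma_AG2_groupoid_def gamma_AG_groupoid_def gamma_closed_def by blast
  have Sne: "S \<noteq> {}"
    using assms unfolding gamma_AG2_groupoid_def gamma_AG_groupoid_def gamma_closed_def by blast
  have LI: "\<And>x y z g d. x \<in> S \<Longrightarrow> y \<in> S \<Longrightarrow> z \<in> S \<Longrightarrow> g \<in> G \<Longrightarrow> d \<in> G \<Longrightarrow>
      m (m x g y) d z = m (m z g y) d x"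
    using assms unfolding gamma_AG2_groupoid_def gamma_AG_groupoid_def by blast
  have AG: "\<And>a b c al be. a \<in> S \<Longrightarrow> b \<in> S \<Longrightarrow> c \<in> S \<Longrightarrow> al \<in> G \<Longrightarrow> be \<in> G \<Longrightarrow>
      m a al (m b be c) = m b al (m a be c)"
    using assms unfolding gamma_AG2_groupoid_def by blast
  show ?thesis
  proof
    assume ir: "intra_regular S G m"
    show "\<forall>A. left_gamma_ideal S G m A \<longrightarrow> A = gprod m (gprod m S G A) G (gprod m S G A)"
    proof (intro allI impI)
      fix A assume lid: "left_gamma_ideal S G m A"
      hence AS: "A \<subseteq> S" and SA: "gprod m S G A \<subseteq> A" unfolding left_gamma_ideal_def by auto
      show "A = gprod m (gprod m S G A) G (gprod m S G A)"
      proof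
        show "gprod m (gprod m S G A) G (gprod m S G A) \<subseteq> A"
        proof
          fix w assume "w \<in> gprod m (gprod m S G A) G (gprod m S G A)"
          then obtain u g v where w: "w = m u g v" and u: "u \<in> gprod m S G A" and g: "g \<in> G"
            and v: "v \<in> gprod m S G A" unfolding gprod_def by blast
          have "u \<in> S" using u AS clo unfolding gprod_def by blast
          moreover have "v \<in> A" using v SA by blast
          ultimately have "w \<in> gprod m S G A" using w g unfolding gprod_def by blast
          thus "w \<in> A" using SA by blast
        qed
      next
        show "A \<subseteq> gprod m (gprod m S G A) G (gprod m S G A)"
        proof
          fix a assume aA: "a \<in> A"
          hence aS: "a \<in> S" using AS by blast
          then obtain x y \<beta> \<gamma> \<delta> where x: "x \<in> S" and y: "y \<in> S" and b: "\<beta> \<in> G"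
            and c: "\<gamma> \<in> G" and d: "\<delta> \<in> G" and e: "a = m (m x \<beta> (m a \<delta> a)) \<gamma> y"
            using ir unfolding intra_regular_def by blast
          define u where "u = m y \<beta> (m x \<delta> a)"
          have uS: "u \<in> S" unfolding u_def using clo x y aS b d by blast
          have "a = m (m a \<beta> (m x \<delta> a)) \<gamma> y" using e AG[of x a a \<beta> \<delta>] x aS b d by simp
          also have "\<dots> = m u \<gamma> a" unfolding u_def using LI[of a "m x \<delta> a" y \<beta> \<gamma>] clo x aS y b c d by simp
          finally have ua: "a = m u \<gamma> a" .
          have u2: "u = m x \<beta> (m y \<delta> a)" unfolding u_def using AG[of y x a \<beta> \<delta>] x y aS b d by simp
          have "a = m u \<gamma> (m u \<gamma> a)" using ua by simp
          hence a2: "a = m (m x \<beta> (m y \<delta> a)) \<gamma> (m u \<gamma> a)" using u2 by simp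
          have "m y \<delta> a \<in> A" using SA y d aA unfolding gprod_def by blast
          hence "m x \<beta> (m y \<delta> a) \<in> gprod m S G A" using x b unfolding gprod_def by blast
          moreover have "m u \<gamma> a \<in> gprod m S G A" using uS c aA unfolding gprod_def by blast
          ultimately show "a \<in> gprod m (gprod m S G A) G (gprod m S G A)"
            using a2 c unfolding gprod_def by blast
        qed
      qed
    qed
  next
    assume H: "\<forall>A. left_gamma_ideal S G m A \<longrightarrow> A = gprod m (gprod m S G A) G (gprod m S G A)"
    have "left_gamma_ideal S G m S" unfolding left_gamma_ideal_def gprod_def using Sne clo by blast
    hence SS: "S = gprod m (gprod m S G S) G (gprod m S G S)" using H by blast
    have dec: "\<exists>p\<in>S. \<exists>\<zeta>\<in>G. \<exists>q\<in>S. z = m p \<zeta> q" if "z \<in> S" for z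
    proof -
      from that SS have "z \<in> gprod m (gprod m S G S) G (gprod m S G S)" by simp
      then obtain u g v where "z = m u g v" "u \<in> gprod m S G S" "g \<in> G" "v \<in> gprod m S G S"
        unfolding gprod_def by blast
      moreover have "u \<in> S" "v \<in> S" using calculation(2,4) clo unfolding gprod_def by blast+
      ultimately show ?thesis by blast
    qed
    show "intra_regular S G m" unfolding intra_regular_def
    proof
      fix a assume aS: "a \<in> S"
      have red: "\<exists>x\<in>S. \<exists>\<eta>\<in>G. m s g (m t h a) = m x \<eta> a"
        if s: "s \<in> S" and t: "t \<in> S" and g: "g \<in> G" and h: "h \<in> G" for s t g h
      proof -
        obtain p \<zeta> q where p: "p \<in> S" and z: "\<zeta> \<in> G" and q: "q \<in> S" and tp: "t = m p \<zeta> q"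
          using dec[OF t] by blast
        have "m s g (m t h a) = m s g (m (m a \<zeta> q) h p)"
          using tp LI[of p q a \<zeta> h] p q aS z h by simp
        also have "\<dots> = m (m a \<zeta> q) g (m s h p)"
          using AG[of s "m a \<zeta> q" p g h] clo s p q aS z g h by simp
        also have "\<dots> = m (m (m s h p) \<zeta> q) g a"
          using LI[of a q "m s h p" \<zeta> g] clo s p q aS z g h by simp
        finally show ?thesis using clo s p q z g h by blast
      qed
      define L where "L = insert a (gprod m S G {a})"
      have SL: "w \<in> gprod m S G L \<Longrightarrow> \<exists>x\<in>S. \<exists>\<eta>\<in>G. w = m x \<eta> a" for w
        unfolding L_def gprod_def using red by blast
      have "left_gamma_ideal S G m L"
        unfolding left_gamma_ideal_def
      proof (intro conjI)
        show "L \<noteq> {}" unfolding L_def by blast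
        show "L \<subseteq> S" unfolding L_def gprod_def using aS clo by blast
        show "gprod m S G L \<subseteq> L" using SL unfolding L_def gprod_def by blast
      qed
      hence "L = gprod m (gprod m S G L) G (gprod m S G L)" using H by blast
      moreover have "a \<in> L" unfolding L_def by blast
      ultimately have "a \<in> gprod m (gprod m S G L) G (gprod m S G L)" by simp
      then obtain P \<gamma> Q where aPQ: "a = m P \<gamma> Q" and P: "P \<in> gprod m S G L" and c: "\<gamma> \<in> G"
        and Q: "Q \<in> gprod m S G L" unfolding gprod_def by blast
      obtain s \<beta> where s: "s \<in> S" and b: "\<beta> \<in> G" and Ps: "P = m s \<beta> a" using SL[OF P] by blast
      obtain t \<delta> where t: "t \<in> S" and d: "\<delta> \<in> G" and Qt: "Q = m t \<delta> a" using SL[OF Q] by blast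
      define u where "u = m s \<beta> t"
      have uS: "u \<in> S" unfolding u_def using clo s t b by blast
      have "a = m (m s \<beta> a) \<gamma> (m t \<delta> a)" using aPQ Ps Qt by simp
      also have "\<dots> = m (m (m t \<delta> a) \<beta> a) \<gamma> s" using LI[of s a "m t \<delta> a" \<beta> \<gamma>] clo s t aS b c d by simp
      also have "\<dots> = m (m (m a \<delta> a) \<beta> t) \<gamma> s" using LI[of t a a \<delta> \<beta>] t aS b d by simp
      also have "\<dots> = m u \<gamma> (m a \<delta> a)" unfolding u_def
        using LI[of "m a \<delta> a" t s \<beta> \<gamma>] clo s t aS b c d by simp
      finally have ua: "a = m u \<gamma> (m a \<delta> a)" .
      have "m a \<delta> a = m (m a \<gamma> (m a \<delta> a)) \<delta> u"
        using LI[of u "m a \<delta> a" a \<gamma> \<delta>] ua clo uS aS c d by simp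
      hence "a = m u \<gamma> (m (m a \<gamma> (m a \<delta> a)) \<delta> u)" using ua by simp
      also have "\<dots> = m (m a \<gamma> (m a \<delta> a)) \<gamma> (m u \<delta> u)"
        using AG[of u "m a \<gamma> (m a \<delta> a)" u \<gamma> \<delta>] clo uS aS c d by simp
      finally have "a = m (m a \<gamma> (m a \<delta> a)) \<gamma> (m u \<delta> u)" .
      moreover have "m u \<delta> u \<in> S" using clo uS d by blast
      ultimately show "\<exists>x\<in>S. \<exists>y\<in>S. \<exists>\<beta>\<in>G. \<exists>\<gamma>\<in>G. \<exists>\<delta>\<in>G. a = m (m x \<beta> (m a \<delta> a)) \<gamma> y"
        using aS c d by blast
    qed
  qed
qed

end
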